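(* Let $I=[a,b)\subseteq[0,1)$ with $a<b$, let $r$ be uniformly distributed on $[a,b)$, and let $\tilde x^n$ be obtained from $r$ by the rule: $\hat x^n=\min\{y^n:F_I(y^n)>r\}$ (in Gray order); $\tilde x^n=\hat x^n+1$ if $r\ge\bar F_I(\hat x^n)$ and $\hat x^n$ is not the largest element in Gray order; otherwise $\tilde x^n=\hat x^n$. Then $$\mathbb{E}\big[\lambda_h(\tilde x^n)\big]>nH(X)-1-2\log_2\rho,$$ where $H(X)=-p(0)\log_2p(0)-p(1)\log_2p(1)$.
   Context: Let $p$ be a probability distribution on $\{0,1\}$ with $p(0),p(1)\in(0,1)$, $p(0)\ne p(1)$, $\rho=\max\{p(0)/p(1),p(1)/p(0)\}$, and $p(x^n)=\prod_i p(x_i)$. Gray code is $g(x^n)=x^n\oplus(0,x_1,\dots,x_{n-1})$; Gray order $\preceq_G$ on $\{0,1\}^n$ is $x^n\preceq_G y^n$ iff $g^{-1}(x^n)\preceq_L g^{-1}(y^n)$ (lexicographic). $x^n+1$ and $x^n-1$ denote the immediate successor and predecessor in Gray order. $F(x^n)=\sum_{a^n\preceq_G x^n}p(a^n)$, with $F(x^n-1):=0$ if $x^n$ is the smallest element. For $I=[a,b)$: $F_I(x^n)=a+(b-a)F(x^n)$; $\alpha_h:=\rho$; $\lambda_h(x^n)=\lfloor-\log_2(\alpha_h(b-a)p(x^n))\rfloor$; $\bar F_I(x^n)=\lfloor F_I(x^n-1)+2^{-\lambda_h(x^n)}\rfloor_{\lambda_h(x^n)}$, where $\lfloor r\rfloor_l=2^{-l}\lfloor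 2^lr\rfloor$ for real $r\ge0$ and integer $l$. *)

theory Defs
  imports "HOL-Probability.Probability"
begin

text \<open>Binary alphabet {0,1} is rendered as bool (False = 0, True = 1);
  a sequence x^n is a bool list of length n, x_1 being the head.\<close>

definition prob :: "(bool \<Rightarrow> real) \<Rightarrow> bool list \<Rightarrow> real" where
  "prob p xs = prod_list (map p xs)"

definition rho :: "(bool \<Rightarrow> real) \<Rightarrow> real" where
  "rho p = max (p False / p True) (p True / p False)"

definition entropy :: "(bool \<Rightarrow> real) \<Rightarrow> real" where
  "entropy p = - p False * log 2 (p False) - p True * log 2 (p True)"

definition gray :: "bool list \<Rightarrow> bool list" where
  "gray xs = map2 (\<lambda>u v. u \<noteq> v) xs (False # xs)"

definition gray_inv :: "nat \<Rightarrow> bool list \<Rightarrow> bool list" where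
  "gray_inv n = the_inv_into {xs. length xs = n} gray"

definition gray_le :: "nat \<Rightarrow> bool list \<Rightarrow> bool list \<Rightarrow> bool" where
  "gray_le n x y \<longleftrightarrow> ord_class.lexordp_eq (gray_inv n x) (gray_inv n y)"

definition gray_lt :: "nat \<Rightarrow> bool list \<Rightarrow> bool list \<Rightarrow> bool" where
  "gray_lt n x y \<longleftrightarrow> ord_class.lexordp (gray_inv n x) (gray_inv n y)"

definition gray_succ :: "nat \<Rightarrow> bool list \<Rightarrow> bool list" where
  "gray_succ n x = (THE y. length y = n \<and> gray_lt n x y \<and>
      (\<forall>z. length z = n \<and> gray_lt n x z \<longrightarrow> gray_le n y z))"

definition gray_is_max :: "nat \<Rightarrow> bool list \<Rightarrow> bool" where
  "gray_is_max n x \<longleftrightarrow> (\<forall>y. length y = n \<longrightarrow> gray_le n y x)"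

text \<open>F(x^n), and F(x^n - 1) (= sum over strict Gray predecessors; 0 for the smallest element).\<close>
definition cdf :: "(bool \<Rightarrow> real) \<Rightarrow> nat \<Rightarrow> bool list \<Rightarrow> real" where
  "cdf p n x = (\<Sum>c\<in>{c. length c = n \<and> gray_le n c x}. prob p c)"

definition cdf_prev :: "(bool \<Rightarrow> real) \<Rightarrow> nat \<Rightarrow> bool list \<Rightarrow> real" where
  "cdf_prev p n x = (\<Sum>c\<in>{c. length c = n \<and> gray_lt n c x}. prob p c)"

definition FI :: "(bool \<Rightarrow> real) \<Rightarrow> nat \<Rightarrow> real \<Rightarrow> real \<Rightarrow> bool list \<Rightarrow> real" where
  "FI p n a b x = a + (b - a) * cdf p n x"

definition FI_prev :: "(bool \<Rightarrow> real) \<Rightarrow> nat \<Rightarrow> real \<Rightarrow> real \<Rightarrow> bool list \<Rightarrow> real" where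
  "FI_prev p n a b x = a + (b - a) * cdf_prev p n x"

text \<open>lambda_h with alpha_h = rho.\<close>
definition lam :: "(bool \<Rightarrow> real) \<Rightarrow> real \<Rightarrow> real \<Rightarrow> bool list \<Rightarrow> int" where
  "lam p a b x = \<lfloor>- log 2 (rho p * (b - a) * prob p x)\<rfloor>"

definition floor_l :: "real \<Rightarrow> int \<Rightarrow> real" where
  "floor_l r l = 2 powr (- real_of_int l) * \<lfloor>2 powr (real_of_int l) * r\<rfloor>"

definition Fbar :: "(bool \<Rightarrow> real) \<Rightarrow> nat \<Rightarrow> real \<Rightarrow> real \<Rightarrow> bool list \<Rightarrow> real" where
  "Fbar p n a b x = floor_l (FI_prev p n a b x + 2 powr (- real_of_int (lam p a b x))) (lam p a b x)"

definition xhat :: "(bool \<Rightarrow> real) \<Rightarrow> nat \<Rightarrow> real \<Rightarrow> real \<Rightarrow> real \<Rightarrow> bool list" where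
  "xhat p n a b r = (THE y. length y = n \<and> FI p n a b y > r \<and>
      (\<forall>z. length z = n \<and> FI p n a b z > r \<longrightarrow> gray_le n y z))"

definition xtilde :: "(bool \<Rightarrow> real) \<Rightarrow> nat \<Rightarrow> real \<Rightarrow> real \<Rightarrow> real \<Rightarrow> bool list" where
  "xtilde p n a b r = (let x = xhat p n a b r in
      if r \<ge> Fbar p n a b x \<and> \<not> gray_is_max n x then gray_succ n x else x)"

end

theory Submission
  imports Defs
begin


fun gc :: "bool \<Rightarrow> bool list \<Rightarrow> bool list" where
  "gc c [] = []"
| "gc c (x # xs) = (x \<noteq> c) # gc x xs"

lemma map2_gc: "map2 (\<lambda>u v. u \<noteq> v) xs (c # xs) = gc c xs"
  by (induction xs arbitrary: c) auto

lemma gray_gc: "gray xs = gc False xs"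
  unfolding gray_def by (rule map2_gc)

lemma length_gc[simp]: "length (gc c xs) = length xs"
  by (induction xs arbitrary: c) auto

lemma gc_inj: "gc c xs = gc c ys \<Longrightarrow> length xs = length ys \<Longrightarrow> xs = ys"
proof (induction xs arbitrary: c ys)
  case Nil then show ?case by simp
next
  case (Cons x xs)
  then obtain y ys' where ys: "ys = y # ys'" by (cases ys) auto
  with Cons.prems have "x = y" by auto
  with Cons ys show ?case by auto
qed

lemma gc_append: "gc c (w @ s) = gc c w @ gc (last (c # w)) s"
  by (induction w arbitrary: c) auto

lemma gc_TT: "gc True (replicate k True) = replicate k False"
  by (induction k) auto
lemma gc_FF: "gc False (replicate k False) = replicate k False"
  by (induction k) auto

definition S :: "nat \<Rightarrow> bool list set" where "S n = {xs. length xs = n}"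

lemma finite_S[simp]: "finite (S n)"
  unfolding S_def using finite_lists_length_eq[of "UNIV::bool set" n] by simp

lemma gray_inj: "inj_on gray (S n)"
  by (auto simp: inj_on_def gray_gc S_def intro: gc_inj)

lemma gray_S: "gray ` S n = S n"
proof -
  have sub: "gray ` S n \<subseteq> S n" by (auto simp: S_def gray_gc)
  have "card (gray ` S n) = card (S n)" using gray_inj by (rule card_image)
  then show ?thesis using sub card_subset_eq by (metis finite_S)
qed

lemma gray_inv_S: "x \<in> S n \<Longrightarrow> gray_inv n x \<in> S n"
  unfolding gray_inv_def S_def[symmetric]
  by (metis gray_S gray_inj the_inv_into_into order_refl)

lemma gray_gray_inv: "x \<in> S n \<Longrightarrow> gray (gray_inv n x) = x"
  unfolding gray_inv_def S_def[symmetric]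
  by (metis gray_S gray_inj f_the_inv_into_f)

lemma gray_inv_gray: "u \<in> S n \<Longrightarrow> gray_inv n (gray u) = u"
  unfolding gray_inv_def S_def[symmetric]
  by (metis gray_inj the_inv_into_f_f)

lemma gray_inv_inj: "x \<in> S n \<Longrightarrow> y \<in> S n \<Longrightarrow> gray_inv n x = gray_inv n y \<Longrightarrow> x = y"
  by (metis gray_gray_inv)

lemma gle_refl: "gray_le n x x"
  by (simp add: gray_le_def lexordp_eq_refl)
lemma gle_antisym: "x \<in> S n \<Longrightarrow> y \<in> S n \<Longrightarrow> gray_le n x y \<Longrightarrow> gray_le n y x \<Longrightarrow> x = y"
  unfolding gray_le_def using lexordp_eq_antisym gray_inv_inj by blast
lemma gle_trans: "gray_le n x y \<Longrightarrow> gray_le n y z \<Longrightarrow> gray_le n x z"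
  unfolding gray_le_def using lexordp_eq_trans by blast
lemma gle_linear: "gray_le n x y \<or> gray_le n y x"
  unfolding gray_le_def using lexordp_eq_linear by blast
lemma glt_conv: "gray_lt n x y \<longleftrightarrow> gray_le n x y \<and> \<not> gray_le n y x"
  unfolding gray_lt_def gray_le_def using lexordp_conv_lexordp_eq by blast
lemma gle_conv: "x \<in> S n \<Longrightarrow> y \<in> S n \<Longrightarrow> gray_le n x y \<longleftrightarrow> gray_lt n x y \<or> x = y"
  using glt_conv gle_antisym gle_refl by blast

lemma lex_FF: "length z = k \<Longrightarrow> ord_class.lexordp_eq (replicate k False) z"
  by (induction k arbitrary: z) (auto simp: length_Suc_conv)
lemma lex_TT: "length z = k \<Longrightarrow> \<not> ord_class.lexordp (replicate k True) z"
  by (induction k arbitrary: z) (auto simp: length_Suc_conv)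
lemma lex_TT_eq: "length z = k \<Longrightarrow> ord_class.lexordp_eq z (replicate k True)"
  by (induction k arbitrary: z) (auto simp: length_Suc_conv)

lemma succ_key: "length z = length w + Suc k \<Longrightarrow> ord_class.lexordp (w @ False # replicate k True) z
   \<Longrightarrow> ord_class.lexordp_eq (w @ True # replicate k False) z"
proof (induction w arbitrary: z)
  case Nil
  then obtain c z' where z: "z = c # z'" "length z' = k" by (auto simp: length_Suc_conv)
  show ?case using Nil lex_FF[OF z(2)] lex_TT[OF z(2)] z by (cases c) auto
next
  case (Cons c w)
  then obtain d z' where z: "z = d # z'" "length z' = length w + Suc k" by (auto simp: length_Suc_conv)
  show ?case using Cons.prems Cons.IH[OF z(2)] z
    by (auto simp: lexordp_into_lexordp_eq)
qed



lemma last_False: "False \<in> set u \<Longrightarrow> \<exists>w k. u = w @ False # replicate k True"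
proof (induction u rule: rev_induct)
  case Nil then show ?case by simp
next
  case (snoc c us)
  show ?case
  proof (cases c)
    case False then show ?thesis by (intro exI[of _ us] exI[of _ 0]) simp
  next
    case True
    with snoc obtain w k where "us = w @ False # replicate k True" by auto
    then show ?thesis using True
      by (intro exI[of _ w] exI[of _ "Suc k"]) (simp add: replicate_append_same[symmetric])
  qed
qed

lemma prob_append: "prob p (xs @ ys) = prob p xs * prob p ys"
  by (simp add: prob_def)
lemma prob_Cons: "prob p (x # ys) = p x * prob p ys"
  by (simp add: prob_def)
lemma prob_pos: "(\<And>c. 0 < p c) \<Longrightarrow> 0 < prob p xs"
  unfolding prob_def by (induction xs) auto

lemma rho_ge: assumes "\<And>c. 0 < p c" shows "p (\<not> d) \<le> rho p * p d"
proof -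
  have "p (\<not> d) / p d \<le> rho p" unfolding rho_def by (cases d) auto
  then show ?thesis using assms[of d] by (simp add: divide_le_eq)
qed

lemma rho_ge1: assumes "\<And>c. 0 < p c" shows "1 \<le> rho p"
proof -
  have "p True / p False \<ge> 1 \<or> p False / p True \<ge> 1" using assms[of True] assms[of False]
    by (auto simp: le_divide_eq)
  then show ?thesis unfolding rho_def by auto
qed


lemma gc_eqTF: "gc False (replicate k True) = gc True (replicate k False)"
  by (cases k) (simp_all add: gc_TT gc_FF)

lemma gray_succ_prop:
  assumes x: "x \<in> S n" and nm: "\<not> gray_is_max n x" and pos: "\<And>c. 0 < p c"
  shows "gray_succ n x \<in> S n \<and> prob p (gray_succ n x) \<le> rho p * prob p x"
proof -
  define u where "u = gray_inv n x"
  have uS: "u \<in> S n" using gray_inv_S[OF x] u_def by simp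
  have "False \<in> set u"
  proof (rule ccontr)
    assume "False \<notin> set u"
    then have "\<And>y. y \<in> set u \<Longrightarrow> y = True" by (case_tac y) auto
    then have uT: "u = replicate n True" using uS unfolding S_def
      by (intro replicate_eqI) auto
    have "gray_is_max n x" unfolding gray_is_max_def gray_le_def u_def[symmetric]
    proof (intro allI impI)
      fix y :: "bool list" assume "length y = n"
      then have "length (gray_inv n y) = n" using gray_inv_S[of y n] by (simp add: S_def)
      then show "ord_class.lexordp_eq (gray_inv n y) u" unfolding uT by (rule lex_TT_eq)
    qed
    with nm show False by simp
  qed
  then obtain w k where u: "u = w @ False # replicate k True" using last_False by blast
  define v where "v = w @ True # replicate k False"
  have vS: "v \<in> S n" using uS u unfolding v_def S_def by simp
  have lt: "ord_class.lexordp u v" unfolding u v_def by (rule lexordp_append_left_rightI) simp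
  have key: "\<And>z. z \<in> S n \<Longrightarrow> ord_class.lexordp u z \<Longrightarrow> ord_class.lexordp_eq v z"
    unfolding v_def using uS u by (intro succ_key) (auto simp: S_def)
  have gs: "gray_succ n x = gray v"
    unfolding gray_succ_def
  proof (rule the_equality)
    have l: "length (gray v) = n" using vS by (simp add: S_def gray_gc)
    have lt2: "gray_lt n x (gray v)" unfolding gray_lt_def u_def[symmetric] gray_inv_gray[OF vS] by (rule lt)
    have "gray_le n (gray v) z" if z: "length z = n" "gray_lt n x z" for z
    proof -
      have zS: "gray_inv n z \<in> S n" using gray_inv_S[of z n] z by (simp add: S_def)
      have "ord_class.lexordp u (gray_inv n z)" using z(2) unfolding gray_lt_def u_def .
      then show ?thesis unfolding gray_le_def gray_inv_gray[OF vS] using key[OF zS] by simp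
    qed
    then show "length (gray v) = n \<and> gray_lt n x (gray v) \<and>
      (\<forall>z. length z = n \<and> gray_lt n x z \<longrightarrow> gray_le n (gray v) z)" using l lt2 by blast
  next
    fix y assume y: "length y = n \<and> gray_lt n x y \<and> (\<forall>z. length z = n \<and> gray_lt n x z \<longrightarrow> gray_le n y z)"
    have yS: "y \<in> S n" using y by (simp add: S_def)
    have gvS: "gray v \<in> S n" using vS by (simp add: S_def gray_gc)
    have lt2: "gray_lt n x (gray v)" unfolding gray_lt_def u_def[symmetric] gray_inv_gray[OF vS] by (rule lt)
    have g1: "gray_le n y (gray v)" using y gvS lt2 by (auto simp: S_def)
    have "ord_class.lexordp u (gray_inv n y)" using y unfolding gray_lt_def u_def by simp
    then have g2: "gray_le n (gray v) y" unfolding gray_le_def gray_inv_gray[OF vS]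
      using key[OF gray_inv_S[OF yS]] by simp
    show "y = gray v" using gle_antisym[OF yS gvS g1 g2] .
  qed
  have xu: "x = gray u" using gray_gray_inv[OF x] u_def by simp
  define d where "d = last (False # w)"
  have e1: "gray u = gc False w @ d # gc False (replicate k True)"
    unfolding u gray_gc gc_append d_def[symmetric] by (cases d) simp_all
  have e2: "gray v = gc False w @ (\<not> d) # gc False (replicate k True)"
    unfolding v_def gray_gc gc_append d_def[symmetric] gc_eqTF by (cases d) simp_all
  have "prob p (gray v) \<le> rho p * prob p (gray u)"
    unfolding e1 e2 prob_append prob_Cons
    using rho_ge[of p d, OF pos] prob_pos[of p "gc False w", OF pos] prob_pos[of p "gc False (replicate k True)", OF pos]
    by (simp add: mult_left_mono mult_right_mono mult.assoc mult.left_commute)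
  then show ?thesis using gs vS xu by (simp add: S_def gray_gc)
qed



lemma S_Suc: "S (Suc n) = (\<lambda>xs. False # xs) ` S n \<union> (\<lambda>xs. True # xs) ` S n"
proof -
  have "xs \<in> (\<lambda>xs. False # xs) ` S n \<union> (\<lambda>xs. True # xs) ` S n" if "xs \<in> S (Suc n)" for xs
  proof -
    from that obtain c ys where "xs = c # ys" "ys \<in> S n" by (auto simp: S_def length_Suc_conv)
    then show ?thesis by (cases c) auto
  qed
  then show ?thesis by (auto simp: S_def)
qed

lemma sum_S_Suc: "sum f (S (Suc n)) = sum (\<lambda>xs. f (False # xs)) (S n) + sum (\<lambda>xs. f (True # xs)) (S n)"
proof -
  have "sum f (S (Suc n)) = sum f ((\<lambda>xs. False # xs) ` S n) + sum f ((\<lambda>xs. True # xs) ` S n)"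
    unfolding S_Suc by (rule sum.union_disjoint) auto
  also have "\<dots> = sum (\<lambda>xs. f (False # xs)) (S n) + sum (\<lambda>xs. f (True # xs)) (S n)"
    by (subst sum.reindex, simp add: inj_on_def, subst sum.reindex, simp add: inj_on_def) simp
  finally show ?thesis .
qed

context
  fixes p :: "bool \<Rightarrow> real"
  assumes pos: "\<And>c. 0 < p c" and one: "p False + p True = 1"
begin

lemma prob_sum: "sum (prob p) (S n) = 1"
proof (induction n)
  case 0 have "S 0 = {[]}" by (auto simp: S_def)
  then show ?case by (simp add: prob_def)
next
  case (Suc n)
  show ?case unfolding sum_S_Suc prob_Cons sum_distrib_left[symmetric] Suc using one by simp
qed

lemma ent_sum: "sum (\<lambda>x. prob p x * (- log 2 (prob p x))) (S n) = real n * entropy p"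
proof (induction n)
  case 0 have "S 0 = {[]}" by (auto simp: S_def)
  then show ?case by (simp add: prob_def)
next
  case (Suc n)
  have e: "p c * prob p xs * (- log 2 (p c * prob p xs)) =
     (- p c * log 2 (p c)) * prob p xs + p c * (prob p xs * (- log 2 (prob p xs)))" for c xs
    using pos[of c] prob_pos[of p xs, OF pos] by (simp add: log_mult algebra_simps)
  show ?case unfolding sum_S_Suc prob_Cons e sum.distrib sum_distrib_left[symmetric]
      Suc prob_sum unfolding entropy_def
  proof -
    have pT: "p True = 1 - p False" using one by simp
    show "- p False * log 2 (p False) * 1 + p False * (real n * (- p False * log 2 (p False) - p True * log 2 (p True))) +
    (- p True * log 2 (p True) * 1 + p True * (real n * (- p False * log 2 (p False) - p True * log 2 (p True)))) =
    real (Suc n) * (- p False * log 2 (p False) - p True * log 2 (p True))"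
      unfolding pT by (simp add: algebra_simps)
  qed
qed

lemma cdf_set: "{c. length c = n \<and> gray_le n c x} = {c \<in> S n. gray_le n c x}"
  by (simp add: S_def)
lemma cdfp_set: "{c. length c = n \<and> gray_lt n c x} = {c \<in> S n. gray_lt n c x}"
  by (simp add: S_def)

lemma cdf_split: assumes "x \<in> S n" shows "cdf p n x = cdf_prev p n x + prob p x"
proof -
  have "{c \<in> S n. gray_le n c x} = insert x {c \<in> S n. gray_lt n c x}"
    using assms gle_conv gle_refl by auto
  moreover have "x \<notin> {c \<in> S n. gray_lt n c x}" by (simp add: glt_conv)
  ultimately show ?thesis unfolding cdf_def cdf_prev_def cdf_set cdfp_set by simp
qed

lemma cdf_le_prev: assumes "gray_lt n x y" shows "cdf p n x \<le> cdf_prev p n y"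
  unfolding cdf_def cdf_prev_def cdf_set cdfp_set
proof (rule sum_mono2)
  show "{c \<in> S n. gray_le n c x} \<subseteq> {c \<in> S n. gray_lt n c y}"
    using assms by (auto simp: glt_conv intro: gle_trans)
qed (auto intro: less_imp_le prob_pos pos)

lemma cdf_le1: "cdf p n x \<le> 1"
proof -
  have "cdf p n x \<le> sum (prob p) (S n)" unfolding cdf_def cdf_set
    by (rule sum_mono2) (auto intro: less_imp_le prob_pos pos)
  then show ?thesis using prob_sum by simp
qed

lemma cdf_prev_ge0: "0 \<le> cdf_prev p n x"
  unfolding cdf_prev_def by (rule sum_nonneg) (auto intro: less_imp_le prob_pos pos)

end


theorem theorem2:
  fixes p :: "bool \<Rightarrow> real" and n :: nat and a b :: real
  assumes "0 < p False" and "0 < p True" and "p False + p True = 1"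
    and "p False \<noteq> p True"
    and "0 \<le> a" and "a < b" and "b \<le> 1"
  shows "(\<integral>r. real_of_int (lam p a b (xtilde p n a b r)) \<partial>(uniform_measure lborel {a..<b}))
           > real n * entropy p - 1 - 2 * log 2 (rho p)"
proof -
  have pos: "\<And>c. 0 < p c" using assms(1,2) by (case_tac c) auto
  note one = assms(3)
  have ab: "0 < b - a" using assms by simp
  have rho1: "1 \<le> rho p" using rho_ge1[of p, OF pos] .
  define U where "U = uniform_measure lborel {a..<b}"
  have emU: "emeasure lborel {a..<b} = ennreal (b - a)" using assms by simp
  have PU: "prob_space U" unfolding U_def by (rule prob_space_uniform_measure) (use emU ab in auto)
  have FU: "finite_measure U" using PU by (rule prob_space.finite_measure)
  have setsU[simp]: "sets U = sets borel" unfolding U_def by simp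
  have spaceU[simp]: "space U = UNIV" unfolding U_def by simp
  define f where "f r = real_of_int (lam p a b (xtilde p n a b r))" for r
  define FI' where "FI' = FI p n a b"
  define FP where "FP = FI_prev p n a b"
  define B where "B x = {FP x ..< FI' x}" for x
  define L where "L x = real_of_int \<lfloor>- log 2 (rho p * rho p * (b - a) * prob p x)\<rfloor>" for x
  define g where "g r = (\<Sum>x\<in>S n. L x * indicator (B x) r)" for r
  have FI_diff: "FI' x - FP x = (b - a) * prob p x" if "x \<in> S n" for x
    unfolding FI'_def FP_def FI_def FI_prev_def cdf_split[OF pos one that] by (simp add: algebra_simps)
  have Bsub: "B x \<subseteq> {a..<b}" for x
  proof -
    have "a \<le> FP x" unfolding FP_def FI_prev_def using cdf_prev_ge0[OF pos one, of n x] ab by simp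
    moreover have "(b - a) * cdf p n x \<le> (b - a) * 1"
      using cdf_le1[OF pos one, of n x] ab by (intro mult_left_mono) auto
    then have "FI' x \<le> b" unfolding FI'_def FI_def by simp
    ultimately show ?thesis unfolding B_def by auto
  qed
  have FI_mono: "FI' z \<le> FP x" if "gray_lt n z x" for z x
    unfolding FI'_def FP_def FI_def FI_prev_def using cdf_le_prev[OF pos one that] ab by simp
  have xhat_B: "xhat p n a b r = x" if x: "x \<in> S n" and r: "r \<in> B x" for x r
  proof -
    have r1: "FP x \<le> r" and r2: "r < FI' x" using r unfolding B_def by auto
    have P: "\<forall>z. length z = n \<and> r < FI p n a b z \<longrightarrow> gray_le n x z"
    proof (intro allI impI)
      fix z assume z: "length z = n \<and> r < FI p n a b z"
      show "gray_le n x z"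
      proof (rule ccontr)
        assume nle: "\<not> gray_le n x z"
        then have "gray_lt n z x" using gle_linear[of n x z] by (simp add: glt_conv)
        then have "FI' z \<le> FP x" by (rule FI_mono)
        then show False using z r1 unfolding FI'_def by simp
      qed
    qed
    show ?thesis unfolding xhat_def
    proof (rule the_equality)
      show "length x = n \<and> r < FI p n a b x \<and> (\<forall>z. length z = n \<and> r < FI p n a b z \<longrightarrow> gray_le n x z)"
        using x r2 P unfolding FI'_def S_def by simp
    next
      fix y assume y: "length y = n \<and> r < FI p n a b y \<and> (\<forall>z. length z = n \<and> r < FI p n a b z \<longrightarrow> gray_le n y z)"
      have "gray_le n y x" using y x r2 unfolding FI'_def S_def by simp
      moreover have "gray_le n x y" using P y by simp
      ultimately show "y = x" using gle_antisym[of y n x] x y by (simp add: S_def)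
    qed
  qed
  have f_ge: "L x \<le> f r" if x: "x \<in> S n" and r: "r \<in> B x" for x r
  proof -
    define y where "y = (if Fbar p n a b x \<le> r \<and> \<not> gray_is_max n x then gray_succ n x else x)"
    have fy: "f r = real_of_int (lam p a b y)"
      unfolding f_def xtilde_def Let_def xhat_B[OF x r] y_def by simp
    have py: "prob p y \<le> rho p * prob p x"
    proof (cases "Fbar p n a b x \<le> r \<and> \<not> gray_is_max n x")
      case True then show ?thesis using gray_succ_prop[OF x _ pos] unfolding y_def by simp
    next
      case False
      have "1 * prob p x \<le> rho p * prob p x" using rho1 prob_pos[of p x, OF pos] by (intro mult_right_mono) auto
      moreover have "y = x" unfolding y_def using False by (rule if_not_P)
      ultimately show ?thesis by simp
    qed
    have rpos: "0 < rho p" using rho1 by simp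
    have ypos: "0 < prob p y" using prob_pos[of p y, OF pos] .
    have "rho p * (b - a) * prob p y \<le> rho p * rho p * (b - a) * prob p x"
      using py rpos ab by (simp add: mult.assoc mult_left_mono)
    then have "log 2 (rho p * (b - a) * prob p y) \<le> log 2 (rho p * rho p * (b - a) * prob p x)"
      using rpos ab ypos prob_pos[of p x, OF pos] by (subst log_le_cancel_iff) auto
    then show ?thesis unfolding fy L_def lam_def by (simp add: floor_mono)
  qed
  have measB: "measure U (B x) = prob p x" if x: "x \<in> S n" for x
  proof -
    have "0 \<le> (b - a) * prob p x" using prob_pos[of p x, OF pos] ab by simp
    then have le: "FP x \<le> FI' x" using FI_diff[OF x] by linarith
    have "measure U (B x) = measure lborel ({a..<b} \<inter> B x) / measure lborel {a..<b}"
      unfolding U_def using emU ab by (intro measure_uniform_measure) (auto simp: B_def)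
    also have "{a..<b} \<inter> B x = B x" using Bsub by auto
    also have "measure lborel (B x) = (b - a) * prob p x" unfolding B_def measure_def
      using le FI_diff[OF x] by simp
    also have "measure lborel {a..<b} = b - a" unfolding measure_def using ab by simp
    finally show ?thesis using ab by simp
  qed
  have disj1: "B x \<inter> B y = {}" if "gray_lt n x y" for x y
    using FI_mono[OF that] unfolding B_def by auto
  have disj: "disjoint_family_on B (S n)"
    unfolding disjoint_family_on_def
  proof (intro ballI impI)
    fix x y assume xy: "x \<in> S n" "y \<in> S n" "x \<noteq> y"
    then have "gray_lt n x y \<or> gray_lt n y x" using gle_linear[of n x y] gle_antisym[of x n y] by (auto simp: glt_conv)
    then show "B x \<inter> B y = {}" using disj1 by blast
  qed
  have Bsets: "B x \<in> sets U" for x unfolding B_def by simp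
  have "measure U (\<Union>x\<in>S n. B x) = (\<Sum>x\<in>S n. measure U (B x))"
    using Bsets disj by (intro finite_measure.finite_measure_finite_Union prob_space.finite_measure PU) auto
  also have "\<dots> = 1" using measB prob_sum[OF pos one, of n] by simp
  finally have AEB: "AE r in U. r \<in> (\<Union>x\<in>S n. B x)" by (rule prob_space.AE_prob_1[OF PU])
  define Q where "Q r = {y \<in> S n. r < FI p n a b y}" for r
  define Phi where "Phi A = (THE y. y \<in> A \<and> (\<forall>z\<in>A. gray_le n y z))" for A
  define Psi where "Psi A r = real_of_int (lam p a b (if Fbar p n a b (Phi A) \<le> r \<and> \<not> gray_is_max n (Phi A)
      then gray_succ n (Phi A) else Phi A))" for A r
  have xhat_Q: "xhat p n a b r = Phi (Q r)" for r
    unfolding xhat_def Phi_def Q_def S_def by simp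
  have f_eq: "f r = Psi (Q r) r" for r
    unfolding f_def Psi_def xtilde_def Let_def xhat_Q ..
  have QS: "Q r \<in> Pow (S n)" for r unfolding Q_def by auto
  have f_sum: "f = (\<lambda>r. \<Sum>A\<in>Pow (S n). indicator {r. Q r = A} r * Psi A r)"
  proof
    fix r
    have "(\<Sum>A\<in>Pow (S n). indicator {r. Q r = A} r * Psi A r) = (\<Sum>A\<in>Pow (S n). if Q r = A then Psi A r else 0)"
      by (rule sum.cong) (auto simp: indicator_def)
    also have "\<dots> = Psi (Q r) r" using QS[of r] by (simp add: sum.delta)
    finally show "f r = (\<Sum>A\<in>Pow (S n). indicator {r. Q r = A} r * Psi A r)" using f_eq by simp
  qed
  have QA: "{r. Q r = A} \<in> sets borel" for A
  proof -
    have "{r. Q r = A} = (if A \<subseteq> S n then (\<Inter>y\<in>S n. {r. (r < FI p n a b y) = (y \<in> A)}) else {})"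
      unfolding Q_def by auto
    moreover have "{r::real. (r < c) = P} \<in> sets borel" for c P by (cases P) auto
    moreover have "S n \<noteq> {}" unfolding S_def by (auto intro: exI[of _ "replicate n False"])
    ultimately show ?thesis by (auto intro!: sets.finite_INT)
  qed
  have PsiM: "Psi A \<in> borel_measurable borel" for A
    unfolding Psi_def by measurable
  have fmeas: "f \<in> borel_measurable U"
  proof -
    have "f \<in> borel_measurable borel" unfolding f_sum
      using QA PsiM by (intro borel_measurable_sum borel_measurable_times borel_measurable_indicator) auto
    then show ?thesis by (simp add: measurable_cong_sets[OF setsU refl])
  qed
  define M where "M = (\<Sum>A\<in>Pow (S n). \<bar>real_of_int (lam p a b (gray_succ n (Phi A)))\<bar> + \<bar>real_of_int (lam p a b (Phi A))\<bar>)"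
  have fbound: "norm (f r) \<le> M" for r
  proof -
    have "norm (f r) \<le> \<bar>real_of_int (lam p a b (gray_succ n (Phi (Q r))))\<bar> + \<bar>real_of_int (lam p a b (Phi (Q r)))\<bar>"
      unfolding f_eq Psi_def by auto
    also have "\<dots> \<le> M" unfolding M_def using QS[of r]
      by (intro member_le_sum[where f="\<lambda>A. \<bar>real_of_int (lam p a b (gray_succ n (Phi A)))\<bar> + \<bar>real_of_int (lam p a b (Phi A))\<bar>"]) auto
    finally show ?thesis .
  qed
  have fint: "integrable U f"
    using fbound fmeas by (intro finite_measure.integrable_const_bound[OF FU]) auto
  have indint: "integrable U (indicator (B x) :: real \<Rightarrow> real)" for x
    using Bsets finite_measure.emeasure_finite[OF FU, of "B x"] by (intro integrable_real_indicator) (auto simp: less_top)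
  have gint: "integrable U g" unfolding g_def[abs_def]
    by (rule Bochner_Integration.integrable_sum, rule integrable_mult_right, rule indint)
  have intg: "integral\<^sup>L U g = (\<Sum>x\<in>S n. L x * prob p x)" unfolding g_def[abs_def]
    using indint measB by (subst Bochner_Integration.integral_sum) auto
  have "AE r in U. g r \<le> f r"
    using AEB
  proof (rule eventually_mono)
    fix r assume "r \<in> (\<Union>x\<in>S n. B x)"
    then obtain x where x: "x \<in> S n" and r: "r \<in> B x" by auto
    have "g r = (\<Sum>y\<in>S n. if y = x then L x else 0)" unfolding g_def
    proof (rule sum.cong)
      fix y assume y: "y \<in> S n"
      show "L y * indicator (B y) r = (if y = x then L x else 0)"
      proof (cases "y = x")
        case False
        then have "r \<notin> B y" using disj x y r unfolding disjoint_family_on_def by blast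
        then show ?thesis using False by simp
      qed (use r in simp)
    qed simp
    also have "\<dots> = L x" using x by simp
    finally show "g r \<le> f r" using f_ge[OF x r] by simp
  qed
  then have "integral\<^sup>L U g \<le> integral\<^sup>L U f" using fint gint by (intro integral_mono_AE)
  moreover have "real n * entropy p - 1 - 2 * log 2 (rho p) < (\<Sum>x\<in>S n. L x * prob p x)"
  proof -
    define c where "c = 2 * log 2 (rho p) + log 2 (b - a) + 1"
    have rpos: "0 < rho p" using rho1 by simp
    have eq: "(- log 2 (rho p * rho p * (b - a) * prob p x) - 1) * prob p x
        = prob p x * (- log 2 (prob p x)) - c * prob p x" for x
    proof -
      have "log 2 (rho p * rho p * (b - a) * prob p x) = log 2 (rho p) + log 2 (rho p) + log 2 (b - a) + log 2 (prob p x)"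
        using rpos ab prob_pos[of p x, OF pos] by (simp add: log_mult)
      then show ?thesis unfolding c_def by (simp add: algebra_simps)
    qed
    have lt: "(- log 2 (rho p * rho p * (b - a) * prob p x) - 1) * prob p x < L x * prob p x" for x
    proof -
      have "- log 2 (rho p * rho p * (b - a) * prob p x) - 1 < L x"
        unfolding L_def using floor_correct[of "- log 2 (rho p * rho p * (b - a) * prob p x)"] by linarith
      then show ?thesis using prob_pos[of p x, OF pos] by (intro mult_strict_right_mono) auto
    qed
    have ne: "S n \<noteq> {}" unfolding S_def by (auto intro: exI[of _ "replicate n False"])
    have "(\<Sum>x\<in>S n. (- log 2 (rho p * rho p * (b - a) * prob p x) - 1) * prob p x) < (\<Sum>x\<in>S n. L x * prob p x)"
      using lt ne by (intro sum_strict_mono) auto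
    moreover have "(\<Sum>x\<in>S n. (- log 2 (rho p * rho p * (b - a) * prob p x) - 1) * prob p x)
        = real n * entropy p - c"
      unfolding eq sum_subtractf sum_distrib_left[symmetric] ent_sum[OF pos one] prob_sum[OF pos one] by simp
    moreover have "log 2 (b - a) \<le> log 2 1" using ab assms(7) assms(5) by (subst log_le_cancel_iff) auto
    ultimately show ?thesis unfolding c_def by simp
  qed
  ultimately have "real n * entropy p - 1 - 2 * log 2 (rho p) < integral\<^sup>L U f" using intg by linarith
  then show ?thesis unfolding U_def f_def[abs_def] .
qed

end
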